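(* Consider the generalized nested logit (GNL) model with $K$ nests, nest parameters $0<\lambda_k\le1$ ($k=1,\dots,K$), and allocation parameters $\alpha_{ik}\ge0$ with $\sum_{k=1}^K\alpha_{ik}=1$ for every $i\in A$. Let $T\ge1$, let $u_1,\dots,u_T$ be arbitrary payoff vectors with $\|u_t\|_\infty\le u_{\max}$, and set $$\eta=\sqrt{\frac{\big(\tfrac{2}{\min_k\lambda_k}-1\big)T u_{\max}^2}{2\log N}}.$$ Then the regret of the GNL-SSA satisfies $$R^T_{SSA}\le u_{\max}\sqrt{2\log N\Big(\frac{2}{\min_k\lambda_k}-1\Big)T}.$$
   Context: $N\ge2$, $A=\{1,\dots,N\}$, $\Delta_N=\{x\in\mathbb{R}^N:x_i\ge0,\sum_ix_i=1\}$. The GNL generator is $G(y)=\sum_{k=1}^K\big(\sum_{i=1}^N(\alpha_{ik}y_i)^{1/\lambda_k}\big)^{\lambda_k}$ for $y\in\mathbb{R}^N_+$. Set $\theta_0=0$, $\theta_t=\sum_{s=1}^tu_s$, and $e^{\theta/\eta}=(e^{\theta_1/\eta},\dots,e^{\theta_N/\eta})$. The GNL-SSA chooses $x_t=\nabla\psi_\eta(\theta_{t-1})$, $t=1,\dots,T$, where $\psi_\eta(\theta)=\eta\log G(e^{\theta/\eta})$; equivalently $x_{t,j}=\sum_{k=1}^K P_{k}\,P_{j|k}$ with $P_k=e^{v_k}/\sum_{\ell}e^{v_\ell}$, $v_k=\lambda_k\log\sum_{i}(\alpha_{ik}e^{\theta_{i,t-1}/\eta})^{1/\lambda_k}$, and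 $P_{j|k}=(\alpha_{jk}e^{\theta_{j,t-1}/\eta})^{1/\lambda_k}/\sum_i(\alpha_{ik}e^{\theta_{i,t-1}/\eta})^{1/\lambda_k}$. The regret of a sequence $x_1,\dots,x_T\in\Delta_N$ is $R^T=\max_{x\in\Delta_N}\langle\theta_T,x\rangle-\sum_{t=1}^T\langle u_t,x_t\rangle$. *)

theory Defs
  imports Complex_Main
begin

text \<open>Vectors in R^N are represented as functions nat => real; only the
  coordinates 1..N are relevant. Nests are indexed by 1..K, rounds by 1..T.\<close>

definition simplex :: "nat \<Rightarrow> (nat \<Rightarrow> real) set" where
  "simplex N = {x. (\<forall>i\<in>{1..N}. 0 \<le> x i) \<and> (\<Sum>i=1..N. x i) = 1}"

definition cum_payoff :: "(nat \<Rightarrow> nat \<Rightarrow> real) \<Rightarrow> nat \<Rightarrow> nat \<Rightarrow> real" where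
  "cum_payoff u t i = (\<Sum>s=1..t. u s i)"

definition gnl_G :: "nat \<Rightarrow> nat \<Rightarrow> (nat \<Rightarrow> nat \<Rightarrow> real) \<Rightarrow> (nat \<Rightarrow> real)
    \<Rightarrow> (nat \<Rightarrow> real) \<Rightarrow> real" where
  "gnl_G N K \<alpha> lam y = (\<Sum>k=1..K. (\<Sum>i=1..N. (\<alpha> i k * y i) powr (1 / lam k)) powr lam k)"

definition nest_sum :: "nat \<Rightarrow> (nat \<Rightarrow> nat \<Rightarrow> real) \<Rightarrow> (nat \<Rightarrow> real) \<Rightarrow> real
    \<Rightarrow> (nat \<Rightarrow> real) \<Rightarrow> nat \<Rightarrow> real" where
  "nest_sum N \<alpha> lam \<eta> \<theta> k = (\<Sum>i=1..N. (\<alpha> i k * exp (\<theta> i / \<eta>)) powr (1 / lam k))"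

definition nest_prob :: "nat \<Rightarrow> nat \<Rightarrow> (nat \<Rightarrow> nat \<Rightarrow> real) \<Rightarrow> (nat \<Rightarrow> real) \<Rightarrow> real
    \<Rightarrow> (nat \<Rightarrow> real) \<Rightarrow> nat \<Rightarrow> real" where
  "nest_prob N K \<alpha> lam \<eta> \<theta> k =
     nest_sum N \<alpha> lam \<eta> \<theta> k powr lam k / (\<Sum>l=1..K. nest_sum N \<alpha> lam \<eta> \<theta> l powr lam l)"

definition cond_prob :: "nat \<Rightarrow> (nat \<Rightarrow> nat \<Rightarrow> real) \<Rightarrow> (nat \<Rightarrow> real) \<Rightarrow> real
    \<Rightarrow> (nat \<Rightarrow> real) \<Rightarrow> nat \<Rightarrow> nat \<Rightarrow> real" where
  "cond_prob N \<alpha> lam \<eta> \<theta> j k =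
     (\<alpha> j k * exp (\<theta> j / \<eta>)) powr (1 / lam k) / nest_sum N \<alpha> lam \<eta> \<theta> k"

text \<open>GNL choice probabilities  x_j = sum_k P_k P_{j|k}  (= grad psi_eta(theta)).\<close>
definition gnl_choice :: "nat \<Rightarrow> nat \<Rightarrow> (nat \<Rightarrow> nat \<Rightarrow> real) \<Rightarrow> (nat \<Rightarrow> real) \<Rightarrow> real
    \<Rightarrow> (nat \<Rightarrow> real) \<Rightarrow> nat \<Rightarrow> real" where
  "gnl_choice N K \<alpha> lam \<eta> \<theta> j =
     (\<Sum>k=1..K. nest_prob N K \<alpha> lam \<eta> \<theta> k * cond_prob N \<alpha> lam \<eta> \<theta> j k)"

definition gnl_ssa :: "nat \<Rightarrow> nat \<Rightarrow> (nat \<Rightarrow> nat \<Rightarrow> real) \<Rightarrow> (nat \<Rightarrow> real) \<Rightarrow> real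
    \<Rightarrow> (nat \<Rightarrow> nat \<Rightarrow> real) \<Rightarrow> nat \<Rightarrow> nat \<Rightarrow> real" where
  "gnl_ssa N K \<alpha> lam \<eta> u t = gnl_choice N K \<alpha> lam \<eta> (cum_payoff u (t - 1))"

definition regret :: "nat \<Rightarrow> nat \<Rightarrow> (nat \<Rightarrow> nat \<Rightarrow> real) \<Rightarrow> (nat \<Rightarrow> nat \<Rightarrow> real) \<Rightarrow> real" where
  "regret N T u x =
     (SUP y\<in>simplex N. (\<Sum>i=1..N. cum_payoff u T i * y i))
     - (\<Sum>t=1..T. \<Sum>i=1..N. u t i * x t i)"

end

theory Submission
  imports Defs
begin

lemma dterm: "l \<noteq> 0 \<Longrightarrow> DERIV (\<lambda>s. c * exp ((z + s * v) / l)) s :> c * exp ((z + s * v) / l) * (v / l)"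
  for c z v l s :: real
  by (auto intro!: derivative_eq_intros simp: field_simps power2_eq_square)

lemma key:
  fixes I Ks :: "nat set" and c :: "nat \<Rightarrow> nat \<Rightarrow> real" and lam z v :: "nat \<Rightarrow> real"
    and b lmin :: real
  assumes fin: "finite I" "finite Ks" and ne: "Ks \<noteq> {}"
    and cnn: "\<forall>i\<in>I. \<forall>k\<in>Ks. 0 \<le> c i k"
    and act: "\<forall>k\<in>Ks. \<exists>i\<in>I. 0 < c i k"
    and lam: "\<forall>k\<in>Ks. 0 < lam k \<and> lmin \<le> lam k \<and> lam k \<le> 1"
    and lmin: "0 < lmin"
    and vb: "\<forall>i\<in>I. \<bar>v i\<bar> \<le> b"
  shows "ln (\<Sum>k\<in>Ks. (\<Sum>i\<in>I. c i k * exp ((z i + v i) / lam k)) powr lam k)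
    \<le> ln (\<Sum>k\<in>Ks. (\<Sum>i\<in>I. c i k * exp (z i / lam k)) powr lam k)
      + (\<Sum>k\<in>Ks. (\<Sum>i\<in>I. c i k * exp (z i / lam k)) powr lam k
            * ((\<Sum>i\<in>I. c i k * exp (z i / lam k) * v i) / (\<Sum>i\<in>I. c i k * exp (z i / lam k))))
        / (\<Sum>k\<in>Ks. (\<Sum>i\<in>I. c i k * exp (z i / lam k)) powr lam k)
      + b\<^sup>2 / (2 * lmin)"
proof -
  define S where "S k s = (\<Sum>i\<in>I. c i k * exp ((z i + s * v i) / lam k))" for k s
  define T where "T k s = (\<Sum>i\<in>I. c i k * exp ((z i + s * v i) / lam k) * v i)" for k s
  define U where "U k s = (\<Sum>i\<in>I. c i k * exp ((z i + s * v i) / lam k) * (v i)\<^sup>2)" for k s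
  define R where "R k s = exp ((lam k - 1) * ln (S k s))" for k s
  define G where "G s = (\<Sum>k\<in>Ks. R k s * S k s)" for s
  define NN where "NN s = (\<Sum>k\<in>Ks. R k s * T k s)" for s
  define N' where "N' s = (\<Sum>k\<in>Ks. R k s * ((lam k - 1) * (T k s)\<^sup>2 / S k s + U k s) / lam k)" for s
  define g where "g s = ln (G s)" for s
  define g1 where "g1 s = NN s / G s" for s
  define g2 where "g2 s = (N' s * G s - NN s * NN s) / (G s * G s)" for s
  have Spos: "0 < S k s" if kin: "k \<in> Ks" for k s
  proof -
    obtain i where i: "i \<in> I" "0 < c i k" using bspec[OF act kin] by blast
    have "0 < c i k * exp ((z i + s * v i) / lam k)" using i by simp
    also have "\<dots> \<le> S k s" unfolding S_def
      by (rule member_le_sum[OF i(1) _ fin(1)]) (use cnn kin in auto)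
    finally show ?thesis .
  qed
  have Rpos: "0 < R k s" for k s unfolding R_def by simp
  have RS: "R k s * S k s = S k s powr lam k" if "k \<in> Ks" for k s
  proof -
    have "R k s * S k s = exp ((lam k - 1) * ln (S k s)) * exp (ln (S k s))"
      using Spos[OF that, of s] by (simp add: R_def)
    also have "\<dots> = exp (lam k * ln (S k s))" by (simp add: exp_add[symmetric] algebra_simps)
    finally show ?thesis using Spos[OF that, of s] by (simp add: powr_def)
  qed
  have Gpos: "0 < G s" for s unfolding G_def
    using ne fin Rpos Spos by (intro sum_pos) auto
  have dS: "DERIV (\<lambda>s. S k s) s :> T k s / lam k" if "k \<in> Ks" for k s
  proof -
    have lk: "lam k \<noteq> 0" using lam that by auto
    have "DERIV (\<lambda>s. S k s) s :> (\<Sum>i\<in>I. c i k * exp ((z i + s * v i) / lam k) * (v i / lam k))"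
      unfolding S_def by (rule DERIV_sum, rule dterm[OF lk])
    then show ?thesis unfolding T_def by (simp add: sum_divide_distrib algebra_simps)
  qed
  have dT: "DERIV (\<lambda>s. T k s) s :> U k s / lam k" if "k \<in> Ks" for k s
  proof -
    have lk: "lam k \<noteq> 0" using lam that by auto
    have "DERIV (\<lambda>s. \<Sum>i\<in>I. (c i k * v i) * exp ((z i + s * v i) / lam k)) s
       :> (\<Sum>i\<in>I. (c i k * v i) * exp ((z i + s * v i) / lam k) * (v i / lam k))"
      by (rule DERIV_sum, rule dterm[OF lk])
    moreover have "(\<lambda>s. \<Sum>i\<in>I. (c i k * v i) * exp ((z i + s * v i) / lam k)) = (\<lambda>s. T k s)"
      unfolding T_def by (simp add: mult_ac)
    ultimately have "DERIV (\<lambda>s. T k s) s :> (\<Sum>i\<in>I. (c i k * v i) * exp ((z i + s * v i) / lam k) * (v i / lam k))"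
      by simp
    then show ?thesis unfolding U_def by (simp add: sum_divide_distrib algebra_simps power2_eq_square)
  qed
  have dR: "DERIV (\<lambda>s. R k s) s :> R k s * ((lam k - 1) * (T k s / lam k / S k s))" if "k \<in> Ks" for k s
    unfolding R_def using Spos[OF that, of s] dS[OF that]
    by (auto intro!: derivative_eq_intros simp: mult_ac)
  have dG: "DERIV G s :> NN s" for s
  proof -
    have "DERIV G s :> (\<Sum>k\<in>Ks. R k s * (T k s / lam k) + R k s * ((lam k - 1) * (T k s / lam k / S k s)) * S k s)"
      unfolding G_def by (rule DERIV_sum, rule DERIV_mult'[OF dR dS])
    moreover have "(\<Sum>k\<in>Ks. R k s * (T k s / lam k) + R k s * ((lam k - 1) * (T k s / lam k / S k s)) * S k s) = NN s"
      unfolding NN_def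
    proof (rule sum.cong[OF refl])
      fix k assume k: "k \<in> Ks"
      then have "S k s \<noteq> 0" "lam k \<noteq> 0" using Spos[OF k, of s] lam by auto
      then show "R k s * (T k s / lam k) + R k s * ((lam k - 1) * (T k s / lam k / S k s)) * S k s = R k s * T k s"
        by (simp add: field_simps)
    qed
    ultimately show ?thesis by simp
  qed
  have dN: "DERIV NN s :> N' s" for s
  proof -
    have "DERIV NN s :> (\<Sum>k\<in>Ks. R k s * (U k s / lam k) + R k s * ((lam k - 1) * (T k s / lam k / S k s)) * T k s)"
      unfolding NN_def by (rule DERIV_sum, rule DERIV_mult'[OF dR dT])
    moreover have "(\<Sum>k\<in>Ks. R k s * (U k s / lam k) + R k s * ((lam k - 1) * (T k s / lam k / S k s)) * T k s) = N' s"
      unfolding N'_def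
    proof (rule sum.cong[OF refl])
      fix k assume k: "k \<in> Ks"
      then have "S k s \<noteq> 0" "lam k \<noteq> 0" using Spos[OF k, of s] lam by auto
      then show "R k s * (U k s / lam k) + R k s * ((lam k - 1) * (T k s / lam k / S k s)) * T k s = R k s * ((lam k - 1) * (T k s)\<^sup>2 / S k s + U k s) / lam k"
        by (simp add: field_simps power2_eq_square)
    qed
    ultimately show ?thesis by simp
  qed
  have dg: "DERIV g s :> g1 s" for s
    unfolding g_def g1_def using dG Gpos[of s] by (auto intro!: derivative_eq_intros)
  have dg1: "DERIV g1 s :> g2 s" for s
    unfolding g1_def g2_def using dG dN Gpos[of s] by (auto intro!: derivative_eq_intros simp: power2_eq_square)
  have g2b: "g2 s \<le> b\<^sup>2 / lmin" for s
  proof -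
    have "N' s \<le> (\<Sum>k\<in>Ks. R k s * S k s * (b\<^sup>2 / lmin))"
      unfolding N'_def
    proof (rule sum_mono)
      fix k assume k: "k \<in> Ks"
      have Sp: "0 < S k s" and lk: "0 < lam k" "lmin \<le> lam k" "lam k \<le> 1" using Spos[OF k, of s] lam k by auto
      have U: "U k s \<le> b\<^sup>2 * S k s" unfolding U_def S_def sum_distrib_left
      proof (rule sum_mono)
        fix i assume i: "i \<in> I"
        have "\<bar>v i\<bar>\<^sup>2 \<le> b\<^sup>2" using vb i by (intro power_mono) auto
        then have "(v i)\<^sup>2 \<le> b\<^sup>2" by simp
        then show "c i k * exp ((z i + s * v i) / lam k) * (v i)\<^sup>2 \<le> b\<^sup>2 * (c i k * exp ((z i + s * v i) / lam k))"
        proof -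
          have "0 \<le> c i k * exp ((z i + s * v i) / lam k)" using cnn i k by simp
          then have "c i k * exp ((z i + s * v i) / lam k) * (v i)\<^sup>2 \<le> c i k * exp ((z i + s * v i) / lam k) * b\<^sup>2"
            by (rule mult_left_mono[OF \<open>(v i)\<^sup>2 \<le> b\<^sup>2\<close>])
          then show ?thesis by (simp only: mult.commute)
        qed
      qed
      have "(lam k - 1) * (T k s)\<^sup>2 / S k s \<le> 0" using Sp lk
        by (intro divide_nonpos_pos mult_nonpos_nonneg) auto
      then have "((lam k - 1) * (T k s)\<^sup>2 / S k s + U k s) / lam k \<le> U k s / lam k"
        using lk by (simp add: divide_right_mono)
      also have "\<dots> \<le> b\<^sup>2 * S k s / lam k" using U lk by (simp add: divide_right_mono)
      also have "\<dots> \<le> b\<^sup>2 * S k s / lmin" using lk lmin Sp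
        by (intro divide_left_mono) auto
      finally have "((lam k - 1) * (T k s)\<^sup>2 / S k s + U k s) / lam k \<le> S k s * (b\<^sup>2 / lmin)" by (simp add: mult.commute)
      then show "R k s * ((lam k - 1) * (T k s)\<^sup>2 / S k s + U k s) / lam k \<le> R k s * S k s * (b\<^sup>2 / lmin)"
        using Rpos[of k s] by (simp add: mult.assoc mult_left_mono times_divide_eq_right[symmetric] del: times_divide_eq_right)
    qed
    also have "\<dots> = G s * (b\<^sup>2 / lmin)" unfolding G_def by (simp add: sum_distrib_right sum_divide_distrib)
    finally have N'le: "N' s \<le> G s * (b\<^sup>2 / lmin)" .
    have "g2 s \<le> N' s * G s / (G s * G s)" unfolding g2_def using Gpos[of s]
      by (intro divide_right_mono) auto
    also have "\<dots> = N' s / G s" using Gpos[of s] by simp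
    also have "\<dots> \<le> b\<^sup>2 / lmin" using N'le Gpos[of s] by (simp add: divide_le_eq mult.commute)
    finally show ?thesis .
  qed
  define diff where "diff n = (if n = 0 then g else if n = 1 then g1 else g2)" for n :: nat
  have "\<exists>t::real. 0 < t \<and> t < 1 \<and>
      g 1 = sum (\<lambda>m. (diff m 0 / fact m) * 1 ^ m) {..<2} + (diff 2 t / fact 2) * 1 ^ 2"
    by (rule Maclaurin) (auto simp: diff_def dg dg1 less_2_cases_iff)
  then obtain t where "g 1 = g 0 + g1 0 + g2 t / 2" by (auto simp: diff_def numeral_2_eq_2)
  then have main: "g 1 \<le> g 0 + g1 0 + b\<^sup>2 / (2 * lmin)" using g2b[of t] by simp
  have Gs: "G s = (\<Sum>k\<in>Ks. S k s powr lam k)" for s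
    unfolding G_def using RS by (intro sum.cong) auto
  have S1: "S k 1 = (\<Sum>i\<in>I. c i k * exp ((z i + v i) / lam k))" for k unfolding S_def by simp
  have S0: "S k 0 = (\<Sum>i\<in>I. c i k * exp (z i / lam k))" for k unfolding S_def by simp
  have T0: "T k 0 = (\<Sum>i\<in>I. c i k * exp (z i / lam k) * v i)" for k unfolding T_def by simp
  have e1: "g 1 = ln (\<Sum>k\<in>Ks. (\<Sum>i\<in>I. c i k * exp ((z i + v i) / lam k)) powr lam k)"
    unfolding g_def Gs S1 ..
  have e0: "g 0 = ln (\<Sum>k\<in>Ks. (\<Sum>i\<in>I. c i k * exp (z i / lam k)) powr lam k)"
    unfolding g_def Gs S0 ..
  have e2: "g1 0 = (\<Sum>k\<in>Ks. (\<Sum>i\<in>I. c i k * exp (z i / lam k)) powr lam k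
            * ((\<Sum>i\<in>I. c i k * exp (z i / lam k) * v i) / (\<Sum>i\<in>I. c i k * exp (z i / lam k))))
        / (\<Sum>k\<in>Ks. (\<Sum>i\<in>I. c i k * exp (z i / lam k)) powr lam k)"
  proof -
    have "NN 0 = (\<Sum>k\<in>Ks. (\<Sum>i\<in>I. c i k * exp (z i / lam k)) powr lam k
            * ((\<Sum>i\<in>I. c i k * exp (z i / lam k) * v i) / (\<Sum>i\<in>I. c i k * exp (z i / lam k))))"
      unfolding NN_def
    proof (rule sum.cong[OF refl])
      fix k assume k: "k \<in> Ks"
      have "R k 0 * T k 0 = S k 0 powr lam k * (T k 0 / S k 0)"
        using Spos[OF k, of 0] RS[OF k, of 0, symmetric] by simp
      then show "R k 0 * T k 0 = (\<Sum>i\<in>I. c i k * exp (z i / lam k)) powr lam k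
            * ((\<Sum>i\<in>I. c i k * exp (z i / lam k) * v i) / (\<Sum>i\<in>I. c i k * exp (z i / lam k)))"
        unfolding S0 T0 .
    qed
    moreover have "G 0 = (\<Sum>k\<in>Ks. (\<Sum>i\<in>I. c i k * exp (z i / lam k)) powr lam k)"
      unfolding Gs S0 ..
    ultimately show ?thesis unfolding g1_def by simp
  qed
  show ?thesis using main e0 e1 e2 by simp
qed

lemma final_alg:
  fixes L C lmin T umax \<eta> :: real
  assumes L: "0 < L" and C: "0 < C" and lm: "0 < lmin" "1 / lmin \<le> C" and T: "0 < T"
    and um: "0 < umax" and eta: "\<eta> = sqrt (C * T * umax\<^sup>2 / (2 * L))"
  shows "\<eta> * L + T * umax\<^sup>2 / (2 * \<eta> * lmin) \<le> umax * sqrt (2 * L * C * T)"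
proof -
  have ep: "0 < \<eta>" unfolding eta using L C T um by simp
  have e2: "\<eta>\<^sup>2 = C * T * umax\<^sup>2 / (2 * L)" unfolding eta using L C T um by simp
  have h: "C * T * umax\<^sup>2 = 2 * L * \<eta>\<^sup>2" using e2 L by (simp add: field_simps)
  have "T * umax\<^sup>2 / (2 * \<eta> * lmin) = (1 / lmin) * (T * umax\<^sup>2 / (2 * \<eta>))"
    by simp
  also have "\<dots> \<le> C * (T * umax\<^sup>2 / (2 * \<eta>))"
    using lm ep T um by (intro mult_right_mono) auto
  also have "\<dots> = \<eta> * L"
  proof -
    have "C * T * umax\<^sup>2 = 2 * L * \<eta>\<^sup>2" using e2 L by (simp add: field_simps)
    then show ?thesis using ep by (simp add: field_simps power2_eq_square)
  qed
  finally have a: "T * umax\<^sup>2 / (2 * \<eta> * lmin) \<le> \<eta> * L" .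
  have "(umax * sqrt (2 * L * C * T))\<^sup>2 = umax\<^sup>2 * (2 * L * C * T)"
    using L C T by (simp add: power_mult_distrib)
  also have "\<dots> = 2 * L * (C * T * umax\<^sup>2)" by (simp add: algebra_simps)
  also have "\<dots> = 2 * L * (2 * L * \<eta>\<^sup>2)" using h by simp
  also have "\<dots> = (2 * L * \<eta>)\<^sup>2" by (simp add: power2_eq_square algebra_simps)
  finally have sq: "(umax * sqrt (2 * L * C * T))\<^sup>2 = (2 * L * \<eta>)\<^sup>2" .
  have "umax * sqrt (2 * L * C * T) = 2 * L * \<eta>"
    by (rule power2_eq_imp_eq[OF sq]) (use L C T um ep in auto)
  then show ?thesis using a by (simp add: mult.commute)
qed

definition Psi :: "nat \<Rightarrow> nat \<Rightarrow> (nat \<Rightarrow> nat \<Rightarrow> real) \<Rightarrow> (nat \<Rightarrow> real) \<Rightarrow> real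
    \<Rightarrow> (nat \<Rightarrow> real) \<Rightarrow> real" where
  "Psi N K \<alpha> lam \<eta> \<theta> = (\<Sum>k=1..K. nest_sum N \<alpha> lam \<eta> \<theta> k powr lam k)"


lemma lp_le:
  fixes a :: "nat \<Rightarrow> real" and I :: "nat set"
  assumes "finite I" "\<forall>i\<in>I. 0 \<le> a i" "0 < l" "l \<le> 1"
  shows "(\<Sum>i\<in>I. a i powr (1 / l)) powr l \<le> (\<Sum>i\<in>I. a i)"
proof (cases "(\<Sum>i\<in>I. a i) = 0")
  case True
  then have "\<forall>i\<in>I. a i = 0" using assms sum_nonneg_eq_0_iff by blast
  then show ?thesis using True by simp
next
  case False
  define s where "s = (\<Sum>i\<in>I. a i)"
  have sp: "0 < s" using False assms unfolding s_def by (simp add: order_less_le sum_nonneg)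
  have "(\<Sum>i\<in>I. (a i / s) powr (1 / l)) \<le> (\<Sum>i\<in>I. a i / s)"
  proof (rule sum_mono)
    fix i assume i: "i \<in> I"
    have le: "a i \<le> s" unfolding s_def using assms i by (intro member_le_sum) auto
    show "(a i / s) powr (1 / l) \<le> a i / s"
    proof (cases "a i = 0")
      case True then show ?thesis by simp
    next
      case False
      then have "0 < a i / s" using assms i sp by auto
      moreover have "a i / s \<le> 1" using le sp by simp
      moreover have "1 \<le> 1 / l" using assms by simp
      ultimately show ?thesis by (rule powr_le_one_le)
    qed
  qed
  also have "\<dots> = 1" using sp unfolding s_def by (simp add: sum_divide_distrib[symmetric])
  finally have "(\<Sum>i\<in>I. a i powr (1 / l)) / s powr (1 / l) \<le> 1"
    by (simp add: powr_divide sum_divide_distrib assms)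
  then have "(\<Sum>i\<in>I. a i powr (1 / l)) \<le> s powr (1 / l)" using sp by simp
  then have "(\<Sum>i\<in>I. a i powr (1 / l)) powr l \<le> (s powr (1 / l)) powr l"
    using assms by (intro powr_mono2) (auto intro: sum_nonneg)
  also have "\<dots> = s" using sp assms by (simp add: powr_powr)
  finally show ?thesis unfolding s_def .
qed

lemma Psi_lower:
  assumes lam: "\<forall>k\<in>{1..K}. 0 < lam k \<and> lam k \<le> 1"
    and alpha_nn: "\<forall>i\<in>{1..N}. \<forall>k\<in>{1..K}. 0 \<le> \<alpha> i k"
    and alpha_sum: "\<forall>i\<in>{1..N}. (\<Sum>k=1..K. \<alpha> i k) = 1"
    and j: "j \<in> {1..N}"
  shows "exp (\<theta> j / \<eta>) \<le> Psi N K \<alpha> lam \<eta> \<theta>"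
proof -
  have "exp (\<theta> j / \<eta>) = (\<Sum>k=1..K. \<alpha> j k * exp (\<theta> j / \<eta>))"
    using alpha_sum j by (simp add: sum_distrib_right[symmetric])
  also have "\<dots> \<le> Psi N K \<alpha> lam \<eta> \<theta>" unfolding Psi_def
  proof (rule sum_mono)
    fix k assume k: "k \<in> {1..K}"
    have lk: "0 < lam k" using lam k by auto
    have nn: "0 \<le> \<alpha> j k * exp (\<theta> j / \<eta>)" using alpha_nn j k by simp
    have "\<alpha> j k * exp (\<theta> j / \<eta>) = ((\<alpha> j k * exp (\<theta> j / \<eta>)) powr (1 / lam k)) powr lam k"
      using nn lk by (simp add: powr_powr)
    also have "\<dots> \<le> nest_sum N \<alpha> lam \<eta> \<theta> k powr lam k"
      unfolding nest_sum_def using lk j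
      by (intro powr_mono2 member_le_sum) auto
    finally show "\<alpha> j k * exp (\<theta> j / \<eta>) \<le> nest_sum N \<alpha> lam \<eta> \<theta> k powr lam k" .
  qed
  finally show ?thesis .
qed

lemma Psi_zero:
  assumes lam: "\<forall>k\<in>{1..K}. 0 < lam k \<and> lam k \<le> 1"
    and alpha_nn: "\<forall>i\<in>{1..N}. \<forall>k\<in>{1..K}. 0 \<le> \<alpha> i k"
    and alpha_sum: "\<forall>i\<in>{1..N}. (\<Sum>k=1..K. \<alpha> i k) = 1"
  shows "Psi N K \<alpha> lam \<eta> (\<lambda>_. 0) \<le> real N"
proof -
  have "Psi N K \<alpha> lam \<eta> (\<lambda>_. 0) \<le> (\<Sum>k=1..K. \<Sum>i=1..N. \<alpha> i k)"
    unfolding Psi_def nest_sum_def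
    by (rule sum_mono) (use lam alpha_nn in \<open>auto intro!: lp_le\<close>)
  also have "\<dots> = (\<Sum>i=1..N. \<Sum>k=1..K. \<alpha> i k)" by (rule sum.swap)
  also have "\<dots> = real N" using alpha_sum by simp
  finally show ?thesis .
qed


lemma ns_eq:
  assumes "\<forall>i\<in>{1..N}. 0 \<le> \<alpha> i k"
  shows "nest_sum N \<alpha> lam \<eta> \<theta> k = (\<Sum>i=1..N. \<alpha> i k powr (1 / lam k) * exp ((\<theta> i / \<eta>) / lam k))"
  unfolding nest_sum_def using assms
  by (intro sum.cong refl) (simp add: powr_mult exp_powr_real)

lemma step:
  fixes N K :: nat and \<alpha> :: "nat \<Rightarrow> nat \<Rightarrow> real" and lam \<theta> w :: "nat \<Rightarrow> real"
    and \<eta> B lmin :: real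
  assumes N: "N \<ge> 1"
    and lam: "\<forall>k\<in>{1..K}. 0 < lam k \<and> lmin \<le> lam k \<and> lam k \<le> 1"
    and lmin: "0 < lmin"
    and alpha_nn: "\<forall>i\<in>{1..N}. \<forall>k\<in>{1..K}. 0 \<le> \<alpha> i k"
    and alpha_sum: "\<forall>i\<in>{1..N}. (\<Sum>k=1..K. \<alpha> i k) = 1"
    and eta: "0 < \<eta>"
    and wb: "\<forall>i\<in>{1..N}. \<bar>w i\<bar> \<le> B"
  shows "ln (Psi N K \<alpha> lam \<eta> (\<lambda>i. \<theta> i + w i))
    \<le> ln (Psi N K \<alpha> lam \<eta> \<theta>) + (\<Sum>j=1..N. w j * gnl_choice N K \<alpha> lam \<eta> \<theta> j) / \<eta>
       + B\<^sup>2 / (2 * \<eta>\<^sup>2 * lmin)"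
proof -
  define Ka where "Ka = {k\<in>{1..K}. \<exists>i\<in>{1..N}. 0 < \<alpha> i k}"
  define c where "c i k = \<alpha> i k powr (1 / lam k)" for i k
  define z where "z i = \<theta> i / \<eta>" for i
  define v where "v i = w i / \<eta>" for i
  have Ka_sub: "Ka \<subseteq> {1..K}" unfolding Ka_def by auto
  have a1: "(\<Sum>k=1..K. \<alpha> 1 k) = 1" using alpha_sum N by simp
  have ex1: "\<exists>k\<in>{1..K}. 0 < \<alpha> 1 k"
  proof (rule ccontr)
    assume "\<not> (\<exists>k\<in>{1..K}. 0 < \<alpha> 1 k)"
    then have "\<forall>k\<in>{1..K}. \<alpha> 1 k \<le> 0" by (simp add: not_less)
    then have "(\<Sum>k=1..K. \<alpha> 1 k) \<le> 0" by (intro sum_nonpos) simp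
    with a1 show False by simp
  qed
  have Ka_ne: "Ka \<noteq> {}"
  proof -
    obtain k where k: "k \<in> {1..K}" "0 < \<alpha> 1 k" using ex1 by blast
    have "(1::nat) \<in> {1..N}" using N by simp
    then have "k \<in> Ka" unfolding Ka_def using k by blast
    then show ?thesis by blast
  qed
  have inact: "\<alpha> i k = 0" if "k \<in> {1..K} - Ka" "i \<in> {1..N}" for i k
    using that alpha_nn unfolding Ka_def by force
  have ns0: "nest_sum N \<alpha> lam \<eta> \<theta>' k = 0" if "k \<in> {1..K} - Ka" for k \<theta>'
    unfolding nest_sum_def using inact[OF that] by simp
  have nsK: "nest_sum N \<alpha> lam \<eta> \<theta>' k = (\<Sum>i=1..N. c i k * exp ((\<theta>' i / \<eta>) / lam k))"
    if "k \<in> {1..K}" for k \<theta>'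
    unfolding c_def using alpha_nn that by (intro ns_eq) auto
  have PsiKa: "Psi N K \<alpha> lam \<eta> \<theta>' = (\<Sum>k\<in>Ka. nest_sum N \<alpha> lam \<eta> \<theta>' k powr lam k)" for \<theta>'
    unfolding Psi_def
    by (rule sum.mono_neutral_right) (use Ka_sub ns0 in auto)
  define S0 where "S0 k = (\<Sum>i=1..N. c i k * exp (z i / lam k))" for k
  have ns_th: "nest_sum N \<alpha> lam \<eta> \<theta> k = S0 k" if "k \<in> {1..K}" for k
    using nsK[OF that, of \<theta>] by (simp add: S0_def z_def)
  have ns_thw: "nest_sum N \<alpha> lam \<eta> (\<lambda>i. \<theta> i + w i) k = (\<Sum>i=1..N. c i k * exp ((z i + v i) / lam k))"
    if "k \<in> {1..K}" for k
    using nsK[OF that, of "\<lambda>i. \<theta> i + w i"] by (simp add: z_def v_def add_divide_distrib)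
  have E1: "Psi N K \<alpha> lam \<eta> (\<lambda>i. \<theta> i + w i) = (\<Sum>k\<in>Ka. (\<Sum>i=1..N. c i k * exp ((z i + v i) / lam k)) powr lam k)"
    unfolding PsiKa using Ka_sub ns_thw by (intro sum.cong) auto
  have E0: "Psi N K \<alpha> lam \<eta> \<theta> = (\<Sum>k\<in>Ka. S0 k powr lam k)"
    unfolding PsiKa using Ka_sub ns_th by (intro sum.cong) auto
  have cp: "cond_prob N \<alpha> lam \<eta> \<theta> j k = c j k * exp (z j / lam k) / S0 k"
    if "k \<in> {1..K}" "j \<in> {1..N}" for j k
    unfolding cond_prob_def ns_th[OF that(1)] c_def z_def using alpha_nn that
    by (simp add: powr_mult exp_powr_real)
  have np: "nest_prob N K \<alpha> lam \<eta> \<theta> k = S0 k powr lam k / Psi N K \<alpha> lam \<eta> \<theta>"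
    if "k \<in> {1..K}" for k
    unfolding nest_prob_def Psi_def ns_th[OF that] by simp
  have "(\<Sum>j=1..N. w j * gnl_choice N K \<alpha> lam \<eta> \<theta> j) / \<eta>
      = (\<Sum>j=1..N. \<Sum>k=1..K. v j * (nest_prob N K \<alpha> lam \<eta> \<theta> k * cond_prob N \<alpha> lam \<eta> \<theta> j k))"
    unfolding gnl_choice_def v_def sum_divide_distrib
    by (intro sum.cong refl) (simp add: sum_distrib_left sum_divide_distrib)
  also have "\<dots> = (\<Sum>k=1..K. \<Sum>j=1..N. v j * (nest_prob N K \<alpha> lam \<eta> \<theta> k * cond_prob N \<alpha> lam \<eta> \<theta> j k))"
    by (rule sum.swap)
  also have "\<dots> = (\<Sum>k\<in>Ka. \<Sum>j=1..N. v j * (nest_prob N K \<alpha> lam \<eta> \<theta> k * cond_prob N \<alpha> lam \<eta> \<theta> j k))"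
    by (rule sum.mono_neutral_right) (use Ka_sub ns0 in \<open>auto simp: cond_prob_def\<close>)
  also have "\<dots> = (\<Sum>k\<in>Ka. S0 k powr lam k * ((\<Sum>i=1..N. c i k * exp (z i / lam k) * v i) / S0 k)
        / Psi N K \<alpha> lam \<eta> \<theta>)"
  proof (rule sum.cong[OF refl])
    fix k assume k: "k \<in> Ka"
    then have k': "k \<in> {1..K}" using Ka_sub by auto
    have "(\<Sum>j=1..N. v j * (nest_prob N K \<alpha> lam \<eta> \<theta> k * cond_prob N \<alpha> lam \<eta> \<theta> j k))
        = (\<Sum>j=1..N. v j * (S0 k powr lam k / Psi N K \<alpha> lam \<eta> \<theta> * (c j k * exp (z j / lam k) / S0 k)))"
      using cp k' np by (intro sum.cong refl) auto
    also have "\<dots> = S0 k powr lam k * ((\<Sum>i=1..N. c i k * exp (z i / lam k) * v i) / S0 k)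
        / Psi N K \<alpha> lam \<eta> \<theta>"
      by (simp add: sum_distrib_left sum_divide_distrib mult_ac)
    finally show "(\<Sum>j=1..N. v j * (nest_prob N K \<alpha> lam \<eta> \<theta> k * cond_prob N \<alpha> lam \<eta> \<theta> j k))
        = S0 k powr lam k * ((\<Sum>i=1..N. c i k * exp (z i / lam k) * v i) / S0 k)
        / Psi N K \<alpha> lam \<eta> \<theta>" .
  qed
  also have "\<dots> = (\<Sum>k\<in>Ka. S0 k powr lam k * ((\<Sum>i=1..N. c i k * exp (z i / lam k) * v i) / S0 k))
        / (\<Sum>k\<in>Ka. S0 k powr lam k)"
    unfolding E0 by (simp add: sum_divide_distrib)
  finally have lin: "(\<Sum>j=1..N. w j * gnl_choice N K \<alpha> lam \<eta> \<theta> j) / \<eta>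
     = (\<Sum>k\<in>Ka. S0 k powr lam k * ((\<Sum>i=1..N. c i k * exp (z i / lam k) * v i) / S0 k))
        / (\<Sum>k\<in>Ka. S0 k powr lam k)" .
  have K: "ln (\<Sum>k\<in>Ka. (\<Sum>i=1..N. c i k * exp ((z i + v i) / lam k)) powr lam k)
    \<le> ln (\<Sum>k\<in>Ka. S0 k powr lam k)
      + (\<Sum>k\<in>Ka. S0 k powr lam k * ((\<Sum>i=1..N. c i k * exp (z i / lam k) * v i) / S0 k))
        / (\<Sum>k\<in>Ka. S0 k powr lam k)
      + (B / \<eta>)\<^sup>2 / (2 * lmin)"
    unfolding S0_def
  proof (rule key)
    show "finite {1..N}" "finite Ka" "Ka \<noteq> {}" using Ka_ne Ka_sub finite_subset by auto
    show "\<forall>i\<in>{1..N}. \<forall>k\<in>Ka. 0 \<le> c i k" unfolding c_def by simp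
    show "\<forall>k\<in>Ka. \<exists>i\<in>{1..N}. 0 < c i k" unfolding c_def Ka_def by (auto intro!: bexI)
    show "\<forall>k\<in>Ka. 0 < lam k \<and> lmin \<le> lam k \<and> lam k \<le> 1" using lam Ka_sub by auto
    show "0 < lmin" by (rule lmin)
    show "\<forall>i\<in>{1..N}. \<bar>v i\<bar> \<le> B / \<eta>" unfolding v_def using wb eta
      by (auto simp: abs_divide divide_right_mono)
  qed
  have "(B / \<eta>)\<^sup>2 / (2 * lmin) = B\<^sup>2 / (2 * \<eta>\<^sup>2 * lmin)"
    by (simp add: power_divide field_simps)
  then show ?thesis using K unfolding E1 E0 lin by simp
qed

theorem proposition2:
  fixes N K T :: nat
    and \<alpha> :: "nat \<Rightarrow> nat \<Rightarrow> real" and lam :: "nat \<Rightarrow> real"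
    and u :: "nat \<Rightarrow> nat \<Rightarrow> real" and umax \<eta> :: real
  assumes N: "N \<ge> 2"
    and K: "K \<ge> 1"
    and lam: "\<forall>k\<in>{1..K}. 0 < lam k \<and> lam k \<le> 1"
    and alpha_nn: "\<forall>i\<in>{1..N}. \<forall>k\<in>{1..K}. 0 \<le> \<alpha> i k"
    and alpha_sum: "\<forall>i\<in>{1..N}. (\<Sum>k=1..K. \<alpha> i k) = 1"
    and T: "T \<ge> 1"
    and u_bd: "\<forall>t\<in>{1..T}. \<forall>i\<in>{1..N}. \<bar>u t i\<bar> \<le> umax"
    and eta: "\<eta> = sqrt ((2 / Min (lam ` {1..K}) - 1) * real T * umax\<^sup>2 / (2 * ln (real N)))"
  shows "regret N T u (gnl_ssa N K \<alpha> lam \<eta> u)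
           \<le> umax * sqrt (2 * ln (real N) * (2 / Min (lam ` {1..K}) - 1) * real T)"
proof -
  define lmin where "lmin = Min (lam ` {1..K})"
  define C where "C = 2 / lmin - 1"
  define L where "L = ln (real N)"
  have lmin_in: "lmin \<in> lam ` {1..K}" unfolding lmin_def using K by (intro Min_in) auto
  then have lmin_pos: "0 < lmin" and lmin_le1: "lmin \<le> 1" using lam by auto
  have lmin_le: "\<forall>k\<in>{1..K}. lmin \<le> lam k" unfolding lmin_def by auto
  have lam': "\<forall>k\<in>{1..K}. 0 < lam k \<and> lmin \<le> lam k \<and> lam k \<le> 1" using lam lmin_le by auto
  have Cge: "1 / lmin \<le> C" unfolding C_def using lmin_pos lmin_le1 by (simp add: field_simps)
  have Cpos: "0 < C" using Cge lmin_pos by (smt (verit) divide_pos_pos)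
  have Lpos: "0 < L" unfolding L_def using N by simp
  have N1: "(1::nat) \<in> {1..N}" using N by simp
  have T1: "(1::nat) \<in> {1..T}" using T by simp
  have um0: "0 \<le> umax" using u_bd N1 T1 by force
  define x where "x = gnl_ssa N K \<alpha> lam \<eta> u"
  define th where "th t = cum_payoff u t" for t
  have simp_ne: "(\<lambda>i. if i = 1 then 1 else 0 :: real) \<in> simplex N"
    unfolding simplex_def using N1 by (simp add: sum.delta)
  show ?thesis
  proof (cases "umax = 0")
    case True
    then have u0: "u t i = 0" if "t \<in> {1..T}" "i \<in> {1..N}" for t i
      using u_bd that by force
    have th0: "cum_payoff u T i = 0" if "i \<in> {1..N}" for i
      unfolding cum_payoff_def using u0 that by simp
    have "regret N T u x = 0"
    proof -
      have "(SUP y\<in>simplex N. (\<Sum>i=1..N. cum_payoff u T i * y i)) = (SUP y\<in>simplex N. (0::real))"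
        using th0 by (intro SUP_cong refl) simp
      also have "\<dots> = 0" using simp_ne by (intro cSUP_const) blast
      finally show ?thesis unfolding regret_def using u0 by simp
    qed
    then show ?thesis using True unfolding x_def by simp
  next
    case False
    then have um: "0 < umax" using um0 by simp
    have etaC: "\<eta> = sqrt (C * real T * umax\<^sup>2 / (2 * L))"
      unfolding eta C_def L_def lmin_def ..
    have ep: "0 < \<eta>" unfolding etaC using Cpos Lpos T um by simp
    have th_Suc: "th (Suc n) = (\<lambda>i. th n i + u (Suc n) i)" for n
      unfolding th_def cum_payoff_def by (rule ext) simp
    have th_0: "th 0 = (\<lambda>i. 0)" unfolding th_def cum_payoff_def by (rule ext) simp
    define P where "P t = Psi N K \<alpha> lam \<eta> (th t)" for t
    have Ppos: "0 < P t" for t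
    proof -
      have "exp (th t 1 / \<eta>) \<le> P t" unfolding P_def
        by (rule Psi_lower[OF lam alpha_nn alpha_sum N1])
      then show ?thesis by (smt (verit) exp_gt_zero)
    qed
    have stp: "ln (P (Suc n)) \<le> ln (P n) + (\<Sum>j=1..N. u (Suc n) j * x (Suc n) j) / \<eta>
        + umax\<^sup>2 / (2 * \<eta>\<^sup>2 * lmin)" if "Suc n \<le> T" for n
    proof -
      have xe: "x (Suc n) j = gnl_choice N K \<alpha> lam \<eta> (th n) j" for j
        unfolding x_def gnl_ssa_def th_def by simp
      have "\<forall>i\<in>{1..N}. \<bar>u (Suc n) i\<bar> \<le> umax" using u_bd that by auto
      then show ?thesis unfolding P_def th_Suc xe
        by (intro step[OF _ lam' lmin_pos alpha_nn alpha_sum ep]) (use N in auto)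
    qed
    have tele: "ln (P n) \<le> ln (P 0) + (\<Sum>t=1..n. (\<Sum>j=1..N. u t j * x t j)) / \<eta>
        + real n * (umax\<^sup>2 / (2 * \<eta>\<^sup>2 * lmin))" if "n \<le> T" for n
      using that
    proof (induction n)
      case 0
      then show ?case by simp
    next
      case (Suc n)
      then have IH: "ln (P n) \<le> ln (P 0) + (\<Sum>t=1..n. (\<Sum>j=1..N. u t j * x t j)) / \<eta>
        + real n * (umax\<^sup>2 / (2 * \<eta>\<^sup>2 * lmin))" by simp
      have "ln (P (Suc n)) \<le> ln (P n) + (\<Sum>j=1..N. u (Suc n) j * x (Suc n) j) / \<eta>
        + umax\<^sup>2 / (2 * \<eta>\<^sup>2 * lmin)" by (rule stp[OF Suc.prems])
      then show ?case using IH by (simp add: add_divide_distrib algebra_simps)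
    qed
    have P0: "ln (P 0) \<le> L"
    proof -
      have "P 0 \<le> real N" unfolding P_def th_0 by (rule Psi_zero[OF lam alpha_nn alpha_sum])
      then show ?thesis unfolding L_def using Ppos[of 0] by simp
    qed
    define S where "S = (\<Sum>t=1..T. \<Sum>i=1..N. u t i * x t i)"
    have lnPT: "\<eta> * ln (P T) \<le> \<eta> * L + S + real T * umax\<^sup>2 / (2 * \<eta> * lmin)"
    proof -
      have "ln (P T) \<le> L + S / \<eta> + real T * (umax\<^sup>2 / (2 * \<eta>\<^sup>2 * lmin))"
        using tele[of T] P0 unfolding S_def by simp
      then have "\<eta> * ln (P T) \<le> \<eta> * (L + S / \<eta> + real T * (umax\<^sup>2 / (2 * \<eta>\<^sup>2 * lmin)))"
        using ep by (simp add: mult_left_mono)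
      also have "\<dots> = \<eta> * L + S + real T * umax\<^sup>2 / (2 * \<eta> * lmin)"
        using ep by (simp add: field_simps power2_eq_square)
      finally show ?thesis .
    qed
    have thle: "th T i \<le> \<eta> * ln (P T)" if "i \<in> {1..N}" for i
    proof -
      have "exp (th T i / \<eta>) \<le> P T" unfolding P_def
        by (rule Psi_lower[OF lam alpha_nn alpha_sum that])
      then have "th T i / \<eta> \<le> ln (P T)" using Ppos[of T]
        by (metis exp_gt_zero ln_exp ln_le_cancel_iff)
      then show ?thesis using ep by (simp add: divide_le_eq mult.commute)
    qed
    have sup: "(SUP y\<in>simplex N. (\<Sum>i=1..N. cum_payoff u T i * y i)) \<le> \<eta> * ln (P T)"
    proof (rule cSUP_least)
      show "simplex N \<noteq> {}" using simp_ne by blast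
    next
      fix y assume y: "y \<in> simplex N"
      have "(\<Sum>i=1..N. cum_payoff u T i * y i) \<le> (\<Sum>i=1..N. \<eta> * ln (P T) * y i)"
        using y thle unfolding simplex_def th_def
        by (intro sum_mono mult_right_mono) auto
      also have "\<dots> = \<eta> * ln (P T)" using y unfolding simplex_def
        by (simp add: sum_distrib_left[symmetric])
      finally show "(\<Sum>i=1..N. cum_payoff u T i * y i) \<le> \<eta> * ln (P T)" .
    qed
    have "regret N T u x \<le> \<eta> * L + real T * umax\<^sup>2 / (2 * \<eta> * lmin)"
      unfolding regret_def using sup lnPT unfolding S_def by simp
    also have "\<dots> \<le> umax * sqrt (2 * L * C * real T)"
      by (rule final_alg[OF Lpos Cpos lmin_pos Cge _ um etaC]) (use T in simp)
    finally show ?thesis unfolding x_def L_def C_def lmin_def .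
  qed
qed

end
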